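(* Let $x_1,\dots,x_m$ be i.i.d. uniform points in $[0,1]^d$ with $d$ fixed, and let $A\in\mathbb R^{(m-1)\times d}$ have $k$-th row $2(x_k-x_{k+1})^T$. Then, with probability tending to one as $m\to\infty$ (for any fixed $\epsilon\in(0,1/2)$ and all sufficiently large $m$, with probability at least $1-3d^2e^{-m^{2\epsilon}}$), $$\|(A^TA)^{-1}A^T\|_2\le\sqrt{\frac{3}{m-1}} .$$
   Context: $\|\cdot\|_2$ denotes the spectral (operator) norm. *)

theory Defs
  imports "HOL-Probability.Probability"
begin

definition unif_cube :: "(real^'d::finite) measure" where
  "unif_cube = uniform_measure lborel {x. \<forall>i. 0 \<le> x$i \<and> x$i \<le> 1}"

text \<open>The joint law of m i.i.d. uniform points x_0,...,x_{m-1} (0-based indexing).\<close>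
definition sample_space :: "nat \<Rightarrow> (nat \<Rightarrow> real^'d::finite) measure" where
  "sample_space m = PiM {..<m} (\<lambda>_. unif_cube)"

definition A_row :: "(nat \<Rightarrow> real^'d::finite) \<Rightarrow> nat \<Rightarrow> real^'d" where
  "A_row x k = 2 *\<^sub>R (x k - x (Suc k))"

text \<open>The Gram matrix A^T A (a d x d matrix), where A has rows A_row x k, k < m-1.\<close>
definition gram :: "nat \<Rightarrow> (nat \<Rightarrow> real^'d::finite) \<Rightarrow> real^'d^'d" where
  "gram m x = (\<Sum>k<m-1. (\<chi> i j. A_row x k $ i * A_row x k $ j))"

text \<open>Spectral (operator 2-)norm of the d x n matrix whose columns are B 0, ..., B (n-1),
  viewed as a linear map from R^n to R^d with Euclidean norms.\<close>
definition spec_norm :: "nat \<Rightarrow> (nat \<Rightarrow> real^'d::finite) \<Rightarrow> real" where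
  "spec_norm n B = Sup {norm (\<Sum>k<n. y k *\<^sub>R B k) | y. (\<Sum>k<n. (y k)\<^sup>2) \<le> 1}"

text \<open>Columns of (A^T A)^{-1} A^T: column k is (A^T A)^{-1} (A_row x k).\<close>
definition pinv_col :: "nat \<Rightarrow> (nat \<Rightarrow> real^'d::finite) \<Rightarrow> nat \<Rightarrow> real^'d" where
  "pinv_col m x k = matrix_inv (gram m x) *v A_row x k"

end

theory Submission
  imports Defs
begin


lemma gram_mult:
  "gram m x *v z = (\<Sum>k<m-1. (A_row x k \<bullet> z) *\<^sub>R A_row x k)"
  unfolding gram_def
  by (simp add: vec_eq_iff matrix_vector_mult_def sum_component inner_vec_def
      sum_distrib_left sum_distrib_right mult_ac; subst sum.swap; simp)

lemma gram_quad:
  "z \<bullet> (gram m x *v z) = (\<Sum>k<m-1. (A_row x k \<bullet> z)\<^sup>2)"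
  by (simp add: gram_mult inner_sum_right power2_eq_square inner_commute)

lemma matrix_inv_props:
  assumes "invertible (A::real^'n^'n)"
  shows "A ** matrix_inv A = mat 1 \<and> matrix_inv A ** A = mat 1"
  using assms unfolding invertible_def matrix_inv_def by (rule someI_ex)

lemma pinv_sum:
  "(\<Sum>k<n. y k *\<^sub>R pinv_col m x k) = matrix_inv (gram m x) *v (\<Sum>k<n. y k *\<^sub>R A_row x k)"
  unfolding pinv_col_def
  by (simp add: linear_sum[OF matrix_vector_mul_linear] matrix_vector_mult_scaleR o_def)

lemma spec_bdd:
  fixes B :: "nat \<Rightarrow> 'a::real_normed_vector" and n :: nat
  shows "bdd_above {norm (\<Sum>k<n. y k *\<^sub>R B k) | y. (\<Sum>k<n. (y k)\<^sup>2) \<le> 1}"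
proof (rule bdd_aboveI, safe)
  fix y :: "nat \<Rightarrow> real" assume y: "(\<Sum>k<n. (y k)\<^sup>2) \<le> 1"
  have yk: "\<bar>y k\<bar> \<le> 1" if "k < n" for k
  proof -
    have "(y k)\<^sup>2 \<le> (\<Sum>k<n. (y k)\<^sup>2)"
      using that by (intro member_le_sum) auto
    then have "(y k)\<^sup>2 \<le> 1\<^sup>2" using y by simp
    then show ?thesis using abs_le_square_iff by (metis abs_one)
  qed
  have "norm (\<Sum>k<n. y k *\<^sub>R B k) \<le> (\<Sum>k<n. norm (y k *\<^sub>R B k))"
    by (rule norm_sum)
  also have "\<dots> \<le> (\<Sum>k<n. norm (B k))"
    using yk by (intro sum_mono) (auto intro!: mult_left_le_one_le)
  finally show "norm (\<Sum>k<n. y k *\<^sub>R B k) \<le> (\<Sum>k<n. norm (B k))" .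
qed

lemma Q_imp_good:
  fixes x :: "nat \<Rightarrow> real^'d::finite"
  assumes Q: "\<forall>z. (norm z)\<^sup>2 \<le> c2 * (\<Sum>k<m-1. (A_row x k \<bullet> z)\<^sup>2)" and c2: "c2 \<ge> 0"
  shows "invertible (gram m x) \<and> spec_norm (m-1) (pinv_col m x) \<le> sqrt c2"
proof -
  let ?G = "gram m x"
  have inv: "invertible ?G"
    unfolding invertible_left_inverse matrix_left_invertible_ker
  proof (intro allI impI)
    fix z assume "?G *v z = 0"
    then have "z \<bullet> (?G *v z) = 0" by simp
    then have "(\<Sum>k<m-1. (A_row x k \<bullet> z)\<^sup>2) = 0" by (simp add: gram_quad)
    with Q have "(norm z)\<^sup>2 \<le> 0" by (metis mult_zero_right)
    then show "z = 0" by simp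
  qed
  have GGi: "?G ** matrix_inv ?G = mat 1" using matrix_inv_props[OF inv] by blast
  have "spec_norm (m-1) (pinv_col m x) \<le> sqrt c2"
    unfolding spec_norm_def
  proof (rule cSup_least)
    show "{norm (\<Sum>k<m - 1. y k *\<^sub>R pinv_col m x k) |y. (\<Sum>k<m - 1. (y k)\<^sup>2) \<le> 1} \<noteq> {}"
      by (rule ccontr) (auto dest: spec[of _ "\<lambda>_. 0"])
  next
    fix v assume "v \<in> {norm (\<Sum>k<m - 1. y k *\<^sub>R pinv_col m x k) |y. (\<Sum>k<m - 1. (y k)\<^sup>2) \<le> 1}"
    then obtain y where y: "(\<Sum>k<m - 1. (y k)\<^sup>2) \<le> 1" and v: "v = norm (\<Sum>k<m - 1. y k *\<^sub>R pinv_col m x k)"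
      by blast
    define w where "w = (\<Sum>k<m-1. y k *\<^sub>R A_row x k)"
    define z where "z = matrix_inv ?G *v w"
    have vz: "v = norm z" using v by (simp add: pinv_sum z_def w_def)
    have Gz: "?G *v z = w" by (simp add: z_def matrix_vector_mul_assoc GGi)
    define q where "q = (\<Sum>k<m-1. (A_row x k \<bullet> z)\<^sup>2)"
    have q0: "q \<ge> 0" unfolding q_def by (intro sum_nonneg) auto
    have "q = z \<bullet> w" using gram_quad[of z m x] Gz by (simp add: q_def)
    also have "\<dots> = (\<Sum>k<m-1. y k * (A_row x k \<bullet> z))"
      by (simp add: w_def inner_sum_right inner_commute)
    finally have "q\<^sup>2 = (\<Sum>k<m-1. y k * (A_row x k \<bullet> z))\<^sup>2" by simp
    also have "\<dots> \<le> (\<Sum>k<m-1. (y k)\<^sup>2) * q"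
      unfolding q_def by (rule Cauchy_Schwarz_ineq_sum)
    also have "\<dots> \<le> q" using y q0 by (intro mult_left_le_one_le sum_nonneg) auto
    finally have "q\<^sup>2 \<le> q" .
    then have q1: "q \<le> 1" using q0 by (cases "q = 0") (auto simp: power2_eq_square)
    have "(norm z)\<^sup>2 \<le> c2 * q" using Q by (simp add: q_def)
    also have "\<dots> \<le> c2" using q1 c2 q0 by (simp add: mult_right_le_one_le)
    finally show "v \<le> sqrt c2" using vz by (simp add: real_le_rsqrt)
  qed
  with inv show ?thesis by blast
qed

lemma good_imp_Q:
  fixes x :: "nat \<Rightarrow> real^'d::finite"
  assumes inv: "invertible (gram m x)" and sn: "spec_norm (m-1) (pinv_col m x) \<le> sqrt c2" and c2: "c2 \<ge> 0"
  shows "\<forall>z. (norm z)\<^sup>2 \<le> c2 * (\<Sum>k<m-1. (A_row x k \<bullet> z)\<^sup>2)"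
proof
  fix z :: "real^'d"
  let ?G = "gram m x"
  define q where "q = (\<Sum>k<m-1. (A_row x k \<bullet> z)\<^sup>2)"
  have q0: "q \<ge> 0" unfolding q_def by (intro sum_nonneg) auto
  have GiG: "matrix_inv ?G ** ?G = mat 1" using matrix_inv_props[OF inv] by blast
  show "(norm z)\<^sup>2 \<le> c2 * q"
  proof (cases "q = 0")
    case True
    then have "\<forall>k\<in>{..<m-1}. (A_row x k \<bullet> z)\<^sup>2 = 0"
      unfolding q_def by (subst (asm) sum_nonneg_eq_0_iff) auto
    then have "?G *v z = 0" by (simp add: gram_mult)
    then have "z = 0"
      using inj_matrix_vector_mult[OF inv]
      by (metis inj_eq matrix_vector_mult_0_right)
    then show ?thesis using True by simp
  next
    case False
    define r where "r = sqrt q"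
    have r0: "r > 0" using q0 False by (simp add: r_def)
    define y where "y = (\<lambda>k. (A_row x k \<bullet> z) / r)"
    have "(\<Sum>k<m-1. (y k)\<^sup>2) = q / r\<^sup>2"
      by (simp add: y_def q_def power_divide sum_divide_distrib)
    also have "\<dots> = 1" using q0 False by (simp add: r_def)
    finally have ysum: "(\<Sum>k<m-1. (y k)\<^sup>2) \<le> 1" by simp
    have "(\<Sum>k<m-1. y k *\<^sub>R A_row x k) = (1/r) *\<^sub>R (?G *v z)"
      by (simp add: gram_mult y_def scaleR_sum_right)
    then have "(\<Sum>k<m-1. y k *\<^sub>R pinv_col m x k) = (1/r) *\<^sub>R z"
      by (simp add: pinv_sum matrix_vector_mult_scaleR matrix_vector_mul_assoc GiG)
    then have "norm ((1/r) *\<^sub>R z) \<le> spec_norm (m-1) (pinv_col m x)"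
      unfolding spec_norm_def using ysum
      by (intro cSup_upper spec_bdd) (metis (mono_tags, lifting) mem_Collect_eq)
    also note sn
    finally have "norm z / r \<le> sqrt c2" using r0 by simp
    then have "norm z \<le> sqrt c2 * r" using r0 by (simp add: divide_le_eq)
    then have "(norm z)\<^sup>2 \<le> (sqrt c2 * r)\<^sup>2" by (intro power_mono) auto
    then show ?thesis using c2 q0 by (simp add: power_mult_distrib r_def)
  qed
qed




lemma sets_unif_cube[measurable_cong, simp]: "sets unif_cube = sets borel"
  by (simp add: unif_cube_def)

lemma meas_coord:
  assumes "k < m"
  shows "(\<lambda>x. x k) \<in> borel_measurable (sample_space m :: (nat \<Rightarrow> real^'d::finite) measure)"
proof -
  have "(\<lambda>x. x k) \<in> measurable (sample_space m :: (nat \<Rightarrow> real^'d::finite) measure) unif_cube"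
    unfolding sample_space_def using assms by (intro measurable_component_singleton) auto
  then show ?thesis by (simp cong: measurable_cong_sets)
qed

lemma meas_A:
  assumes "k < m - 1"
  shows "(\<lambda>x. A_row x k) \<in> borel_measurable (sample_space m :: (nat \<Rightarrow> real^'d::finite) measure)"
proof -
  have "(\<lambda>x. x k) \<in> borel_measurable (sample_space m :: (nat \<Rightarrow> real^'d::finite) measure)"
    using assms by (intro meas_coord) auto
  moreover have "(\<lambda>x. x (Suc k)) \<in> borel_measurable (sample_space m :: (nat \<Rightarrow> real^'d::finite) measure)"
    using assms by (intro meas_coord) auto
  ultimately show ?thesis unfolding A_row_def
    by (intro borel_measurable_scaleR borel_measurable_diff borel_measurable_const)
qed

lemma Q_sets:
  "{x \<in> space (sample_space m :: (nat \<Rightarrow> real^'d::finite) measure).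
      \<forall>z. (norm z)\<^sup>2 \<le> c2 * (\<Sum>k<m-1. (A_row x k \<bullet> z)\<^sup>2)} \<in> sets (sample_space m)"
proof -
  obtain D :: "(real^'d) set" where D: "countable D" "\<And>X. open X \<Longrightarrow> X \<noteq> {} \<Longrightarrow> \<exists>d\<in>D. d \<in> X"
    using countable_dense_exists by blast
  let ?P = "\<lambda>z x. (norm z)\<^sup>2 \<le> c2 * (\<Sum>k<m-1. (A_row x k \<bullet> z)\<^sup>2)"
  have eq: "(\<forall>z. ?P z x) \<longleftrightarrow> (\<forall>z\<in>D. ?P z x)" for x
  proof
    assume H: "\<forall>z\<in>D. ?P z x"
    show "\<forall>z. ?P z x"
    proof (rule ccontr)
      assume "\<not> (\<forall>z. ?P z x)"
      then obtain z0 where z0: "\<not> ?P z0 x" by blast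
      let ?X = "{z. c2 * (\<Sum>k<m-1. (A_row x k \<bullet> z)\<^sup>2) < (norm z)\<^sup>2}"
      have "open ?X"
        by (intro open_Collect_less continuous_intros)
      moreover have "z0 \<in> ?X" using z0 by simp
      ultimately obtain d where "d \<in> D" "d \<in> ?X" using D(2)[of ?X] by blast
      then show False using H by force
    qed
  qed auto
  have "{x \<in> space (sample_space m :: (nat \<Rightarrow> real^'d::finite) measure). \<forall>z. ?P z x}
      = {x \<in> space (sample_space m :: (nat \<Rightarrow> real^'d::finite) measure). \<forall>z\<in>D. ?P z x}"
    using eq by blast
  also have "\<dots> \<in> sets (sample_space m)"
  proof (rule sets.sets_Collect_countable_All'[OF _ D(1)])
    fix z :: "real^'d"
    have "(\<lambda>x. c2 * (\<Sum>k<m-1. (A_row x k \<bullet> z)\<^sup>2)) \<in> borel_measurable (sample_space m :: (nat \<Rightarrow> real^'d::finite) measure)"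
      using meas_A by (intro borel_measurable_times borel_measurable_const borel_measurable_sum
          borel_measurable_power borel_measurable_inner) auto
    then show "{x \<in> space (sample_space m :: (nat \<Rightarrow> real^'d::finite) measure). ?P z x} \<in> sets (sample_space m)"
      by measurable
  qed
  finally show ?thesis .
qed




definition cubeC :: "(real^'d::finite) set" where
  "cubeC = {x. \<forall>i. 0 \<le> x$i \<and> x$i \<le> 1}"

lemma cubeC_cbox: "cubeC = cbox 0 (\<chi> i. 1)"
  by (auto simp: cubeC_def mem_box_cart)

lemma Basis_vec_axis: "(b::real^'d::finite) \<in> Basis \<longleftrightarrow> (\<exists>i. b = axis i 1)"
  by (auto simp: Basis_vec_def)

lemma emeasure_cubeC: "emeasure lborel (cubeC :: (real^'d::finite) set) = 1"
proof -
  have "emeasure lborel (cubeC :: (real^'d::finite) set) = (\<Prod>b\<in>(Basis::(real^'d) set). ((\<chi> i. 1) - 0) \<bullet> b)"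
    unfolding cubeC_cbox
    by (rule emeasure_lborel_cbox) (auto simp: Basis_vec_axis inner_axis)
  also have "(\<Prod>b\<in>(Basis::(real^'d) set). ((\<chi> i. 1) - 0) \<bullet> b) = (1::real)"
    by (intro prod.neutral) (auto simp: Basis_vec_axis inner_axis)
  finally show ?thesis by simp
qed

lemma cubeC_sets[measurable]: "cubeC \<in> sets borel"
  unfolding cubeC_cbox by simp

lemma unif_cube_eq: "unif_cube = uniform_measure lborel cubeC"
  by (simp add: unif_cube_def cubeC_def)

lemma prob_unif: "prob_space (unif_cube :: (real^'d::finite) measure)"
  unfolding unif_cube_eq by (rule prob_space_uniform_measure) (simp_all add: emeasure_cubeC)

lemma AE_unif: "AE x in (unif_cube :: (real^'d::finite) measure). x \<in> cubeC"
  unfolding unif_cube_eq by (rule AE_uniform_measureI) auto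

lemma nn_unif:
  assumes [measurable]: "\<And>b. g b \<in> borel_measurable borel"
  shows "(\<integral>\<^sup>+x. (\<Prod>b\<in>Basis. g b (x \<bullet> b)) \<partial>(unif_cube :: (real^'d::finite) measure))
       = (\<Prod>b\<in>(Basis::(real^'d) set). \<integral>\<^sup>+t. g b t * indicator {0..1} t \<partial>lborel)"
proof -
  have ind: "indicator cubeC x = (\<Prod>b\<in>(Basis::(real^'d) set). indicator {0..1::real} (x \<bullet> b) :: ennreal)" for x :: "real^'d"
  proof -
    have ax: "axis i 1 \<in> (Basis::(real^'d) set)" "x \<bullet> axis i 1 = x $ i" for i
      by (auto simp: inner_axis)
    have "(x \<in> cubeC) = (\<forall>b\<in>(Basis::(real^'d) set). x \<bullet> b \<in> {0..1})"
      unfolding cubeC_def by (auto simp: Basis_vec_axis inner_axis) (metis ax(1,2))+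
    then show ?thesis
      by (auto simp: indicator_def prod_zero_iff)
  qed
  have "(\<integral>\<^sup>+x. (\<Prod>b\<in>Basis. g b (x \<bullet> b)) \<partial>(unif_cube :: (real^'d::finite) measure))
     = (\<integral>\<^sup>+x. (\<Prod>b\<in>Basis. g b (x \<bullet> b)) * indicator cubeC x \<partial>lborel) / emeasure lborel (cubeC :: (real^'d) set)"
    unfolding unif_cube_eq by (rule nn_integral_uniform_measure) measurable
  also have "\<dots> = (\<integral>\<^sup>+(x::real^'d). (\<Prod>b\<in>(Basis::(real^'d) set). g b (x \<bullet> b) * indicator {0..1} (x \<bullet> b)) \<partial>lborel)"
    by (simp add: emeasure_cubeC ind prod.distrib divide_ennreal_def)
  also have "\<dots> = (\<Prod>b\<in>(Basis::(real^'d) set). \<integral>\<^sup>+t. g b t * indicator {0..1} t \<partial>lborel)"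
    by (rule nn_integral_lborel_prod) auto
  finally show ?thesis .
qed

lemma nn_pow01: "(\<integral>\<^sup>+t. ennreal (t^k) * indicator {0..1} t \<partial>lborel) = ennreal (1 / Suc k)"
proof -
  have "(\<integral>\<^sup>+t. ennreal (t^k) * indicator {0..1} t \<partial>lborel) = (\<integral>\<^sup>+t. ennreal (t^k * indicator {0..1} t) \<partial>lborel)"
    by (intro nn_integral_cong) (auto simp: indicator_def)
  also have "\<dots> = ennreal (\<integral>t. t^k * indicator {0..1} t \<partial>lborel)"
    by (intro nn_integral_eq_integral borel_integrable_atLeastAtMost AE_I2) (auto simp: indicator_def)
  also have "\<dots> = ennreal (1 / Suc k)"
    by (subst integral_power) auto
  finally show ?thesis .
qed

lemma nn_one01: "(\<integral>\<^sup>+t. 1 * indicator {0..1::real} t \<partial>lborel) = 1"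
  by simp

lemma inner_axis1: "(x::real^'d::finite) \<bullet> axis i 1 = x $ i"
  by (simp add: inner_axis)

lemma axis_Basis1: "axis i (1::real) \<in> (Basis :: (real^'d::finite) set)"
  by simp

lemma int_unif_conv:
  fixes f :: "real^'d::finite \<Rightarrow> real"
  assumes [measurable]: "f \<in> borel_measurable borel" and nn: "\<And>x. x \<in> cubeC \<Longrightarrow> f x \<ge> 0"
  shows "integral\<^sup>L unif_cube f = enn2real (\<integral>\<^sup>+x. ennreal (f x) \<partial>unif_cube)"
  by (rule integral_eq_nn_integral) (auto intro: eventually_mono[OF AE_unif] nn)

lemma E_coord: "integral\<^sup>L (unif_cube :: (real^'d::finite) measure) (\<lambda>x. x $ i) = 1/2"
proof -
  let ?e = "axis i (1::real) :: real^'d"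
  define g where "g = (\<lambda>b t. if b = ?e then ennreal t else 1)"
  have gm: "g b \<in> borel_measurable borel" for b by (cases "b = ?e") (auto simp: g_def)
  have "(\<integral>\<^sup>+x. ennreal (x $ i) \<partial>(unif_cube :: (real^'d::finite) measure))
      = (\<integral>\<^sup>+x. (\<Prod>b\<in>Basis. g b (x \<bullet> b)) \<partial>(unif_cube :: (real^'d::finite) measure))"
    by (simp add: g_def prod.delta inner_axis1)
  also have "\<dots> = (\<Prod>b\<in>(Basis::(real^'d) set). \<integral>\<^sup>+t. g b t * indicator {0..1} t \<partial>lborel)"
    by (rule nn_unif[OF gm])
  also have "\<dots> = (\<Prod>b\<in>(Basis::(real^'d) set). if b = ?e then ennreal (1/2) else 1)"
    using nn_pow01[of 1] by (intro prod.cong) (auto simp: g_def)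
  also have "\<dots> = ennreal (1/2)" by (simp add: prod.delta)
  finally have h: "(\<integral>\<^sup>+x. ennreal (((\<lambda>x. x $ i)) x) \<partial>(unif_cube :: (real^'d::finite) measure)) = ennreal (1/2)" .
  have I: "integral\<^sup>L (unif_cube :: (real^'d::finite) measure) (\<lambda>x. x $ i) = enn2real (\<integral>\<^sup>+x. ennreal (((\<lambda>x. x $ i)) x) \<partial>(unif_cube :: (real^'d::finite) measure))"
    by (rule int_unif_conv) (auto simp: cubeC_def)
  show ?thesis unfolding I h by (rule enn2real_ennreal) simp
qed

lemma E_sq: "integral\<^sup>L (unif_cube :: (real^'d::finite) measure) (\<lambda>x. (x $ i)^2) = 1/3"
proof -
  let ?e = "axis i (1::real) :: real^'d"
  define g where "g = (\<lambda>b t. if b = ?e then ennreal (t^2) else 1)"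
  have gm: "g b \<in> borel_measurable borel" for b by (cases "b = ?e") (auto simp: g_def)
  have "(\<integral>\<^sup>+x. ennreal ((x $ i)^2) \<partial>(unif_cube :: (real^'d::finite) measure))
      = (\<integral>\<^sup>+x. (\<Prod>b\<in>Basis. g b (x \<bullet> b)) \<partial>(unif_cube :: (real^'d::finite) measure))"
    by (simp add: g_def prod.delta inner_axis1)
  also have "\<dots> = (\<Prod>b\<in>(Basis::(real^'d) set). \<integral>\<^sup>+t. g b t * indicator {0..1} t \<partial>lborel)"
    by (rule nn_unif[OF gm])
  also have "\<dots> = (\<Prod>b\<in>(Basis::(real^'d) set). if b = ?e then ennreal (1/3) else 1)"
    using nn_pow01[of 2] by (intro prod.cong) (auto simp: g_def)
  also have "\<dots> = ennreal (1/3)" by (simp add: prod.delta)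
  finally have h: "(\<integral>\<^sup>+x. ennreal (((\<lambda>x. (x $ i)^2)) x) \<partial>(unif_cube :: (real^'d::finite) measure)) = ennreal (1/3)" .
  have I: "integral\<^sup>L (unif_cube :: (real^'d::finite) measure) (\<lambda>x. (x $ i)^2) = enn2real (\<integral>\<^sup>+x. ennreal (((\<lambda>x. (x $ i)^2)) x) \<partial>(unif_cube :: (real^'d::finite) measure))"
    by (rule int_unif_conv) (auto simp: cubeC_def)
  show ?thesis unfolding I h by (rule enn2real_ennreal) simp
qed

lemma E_cross:
  assumes ij: "i \<noteq> j"
  shows "integral\<^sup>L (unif_cube :: (real^'d::finite) measure) (\<lambda>x. x $ i * x $ j) = 1/4"
proof -
  let ?e = "axis i (1::real) :: real^'d"
  let ?f = "axis j (1::real) :: real^'d"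
  have ef: "?e \<noteq> ?f" using ij by (simp add: axis_eq_axis)
  define g where "g = (\<lambda>b t. (if b = ?e then ennreal t else 1) * (if b = ?f then ennreal t else 1))"
  have gm: "g b \<in> borel_measurable borel" for b
    by (cases "b = ?e"; cases "b = ?f") (auto simp: g_def)
  have "(\<integral>\<^sup>+x. ennreal (x $ i * x $ j) \<partial>(unif_cube :: (real^'d::finite) measure))
      = (\<integral>\<^sup>+x. (\<Prod>b\<in>Basis. g b (x \<bullet> b)) \<partial>(unif_cube :: (real^'d::finite) measure))"
  proof (rule nn_integral_cong_AE, rule eventually_mono[OF AE_unif])
    fix x :: "real^'d" assume "x \<in> cubeC"
    then have "x $ i \<ge> 0" "x $ j \<ge> 0" by (auto simp: cubeC_def)
    then show "ennreal (x $ i * x $ j) = (\<Prod>b\<in>Basis. g b (x \<bullet> b))"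
      by (simp add: g_def prod.distrib prod.delta inner_axis1 ennreal_mult)
  qed
  also have "\<dots> = (\<Prod>b\<in>(Basis::(real^'d) set). \<integral>\<^sup>+t. g b t * indicator {0..1} t \<partial>lborel)"
    by (rule nn_unif[OF gm])
  also have "\<dots> = (\<Prod>b\<in>(Basis::(real^'d) set). (if b = ?e then ennreal (1/2) else 1) * (if b = ?f then ennreal (1/2) else 1))"
    using nn_pow01[of 1] ef by (intro prod.cong) (auto simp: g_def)
  also have "\<dots> = ennreal (1/2) * ennreal (1/2)" using ef by (simp add: prod.distrib prod.delta)
  also have "\<dots> = ennreal (1/4)" by (subst ennreal_mult[symmetric]) auto
  finally have h: "(\<integral>\<^sup>+x. ennreal (((\<lambda>x. x $ i * x $ j)) x) \<partial>(unif_cube :: (real^'d::finite) measure)) = ennreal (1/4)" .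
  have I: "integral\<^sup>L (unif_cube :: (real^'d::finite) measure) (\<lambda>x. x $ i * x $ j) = enn2real (\<integral>\<^sup>+x. ennreal (((\<lambda>x. x $ i * x $ j)) x) \<partial>(unif_cube :: (real^'d::finite) measure))"
    by (rule int_unif_conv) (auto simp: cubeC_def)
  show ?thesis unfolding I h by (rule enn2real_ennreal) simp
qed




lemma prob_M: "prob_space (sample_space m :: (nat \<Rightarrow> real^'d::finite) measure)"
  unfolding sample_space_def by (intro prob_space_PiM prob_unif)

lemma PSF: "product_sigma_finite (\<lambda>_::nat. unif_cube :: (real^'d::finite) measure)"
proof -
  interpret U: prob_space "unif_cube :: (real^'d::finite) measure" by (rule prob_unif)
  show ?thesis by unfold_locales
qed

lemma PM_int2:
  fixes f1 f2 :: "real^'d::finite \<Rightarrow> real"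
  assumes k: "k1 \<noteq> k2" "k1 < m" "k2 < m"
    and i: "integrable unif_cube f1" "integrable unif_cube f2"
  shows "integrable (sample_space m :: (nat \<Rightarrow> real^'d::finite) measure) (\<lambda>\<omega>. f1 (\<omega> k1) * f2 (\<omega> k2))"
    "integral\<^sup>L (sample_space m :: (nat \<Rightarrow> real^'d::finite) measure) (\<lambda>\<omega>. f1 (\<omega> k1) * f2 (\<omega> k2))
      = integral\<^sup>L unif_cube f1 * integral\<^sup>L unif_cube f2"
proof -
  interpret U: prob_space "unif_cube :: (real^'d::finite) measure" by (rule prob_unif)
  interpret P: product_sigma_finite "\<lambda>_::nat. unif_cube :: (real^'d::finite) measure" by (rule PSF)
  define F where "F = (\<lambda>l u. (if l = k1 then f1 u else 1) * (if l = k2 then f2 u else 1))"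
  have prodF: "(\<Prod>l\<in>{..<m}. F l (\<omega> l)) = f1 (\<omega> k1) * f2 (\<omega> k2)" for \<omega> :: "nat \<Rightarrow> real^'d"
    using k by (simp add: F_def prod.distrib prod.delta)
  have intF: "integrable unif_cube (F l)" for l
    using k i by (cases "l = k1"; cases "l = k2") (auto simp: F_def)
  have intFv: "integral\<^sup>L unif_cube (F l) = (if l = k1 then integral\<^sup>L unif_cube f1 else 1) * (if l = k2 then integral\<^sup>L unif_cube f2 else 1)" for l
    using k by (cases "l = k1"; cases "l = k2") (auto simp: F_def U.prob_space)
  show "integrable (sample_space m :: (nat \<Rightarrow> real^'d::finite) measure) (\<lambda>\<omega>. f1 (\<omega> k1) * f2 (\<omega> k2))"
    using P.product_integrable_prod[of "{..<m}" F] intF unfolding sample_space_def prodF by simp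
  have "integral\<^sup>L (sample_space m :: (nat \<Rightarrow> real^'d::finite) measure) (\<lambda>\<omega>. \<Prod>l\<in>{..<m}. F l (\<omega> l))
       = (\<Prod>l\<in>{..<m}. integral\<^sup>L unif_cube (F l))"
    unfolding sample_space_def using intF by (intro P.product_integral_prod) auto
  also have "\<dots> = integral\<^sup>L unif_cube f1 * integral\<^sup>L unif_cube f2"
    using k by (simp add: intFv prod.distrib prod.delta)
  finally show "integral\<^sup>L (sample_space m :: (nat \<Rightarrow> real^'d::finite) measure) (\<lambda>\<omega>. f1 (\<omega> k1) * f2 (\<omega> k2))
      = integral\<^sup>L unif_cube f1 * integral\<^sup>L unif_cube f2" unfolding prodF .
qed

lemma PM_int1:
  fixes f :: "real^'d::finite \<Rightarrow> real"
  assumes k: "k < m" and i: "integrable unif_cube f"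
  shows "integrable (sample_space m :: (nat \<Rightarrow> real^'d::finite) measure) (\<lambda>\<omega>. f (\<omega> k))"
    "integral\<^sup>L (sample_space m :: (nat \<Rightarrow> real^'d::finite) measure) (\<lambda>\<omega>. f (\<omega> k)) = integral\<^sup>L unif_cube f"
proof -
  interpret U: prob_space "unif_cube :: (real^'d::finite) measure" by (rule prob_unif)
  interpret P: product_sigma_finite "\<lambda>_::nat. unif_cube :: (real^'d::finite) measure" by (rule PSF)
  define F where "F = (\<lambda>l u. if l = k then f u else 1)"
  have prodF: "(\<Prod>l\<in>{..<m}. F l (\<omega> l)) = f (\<omega> k)" for \<omega> :: "nat \<Rightarrow> real^'d"
    using k by (simp add: F_def prod.delta)
  have intF: "integrable unif_cube (F l)" for l
    using k i by (cases "l = k") (auto simp: F_def)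
  have intFv: "integral\<^sup>L unif_cube (F l) = (if l = k then integral\<^sup>L unif_cube f else 1)" for l
    using k by (cases "l = k") (auto simp: F_def U.prob_space)
  show "integrable (sample_space m :: (nat \<Rightarrow> real^'d::finite) measure) (\<lambda>\<omega>. f (\<omega> k))"
    using P.product_integrable_prod[of "{..<m}" F] intF unfolding sample_space_def prodF by simp
  have "integral\<^sup>L (sample_space m :: (nat \<Rightarrow> real^'d::finite) measure) (\<lambda>\<omega>. \<Prod>l\<in>{..<m}. F l (\<omega> l))
       = (\<Prod>l\<in>{..<m}. integral\<^sup>L unif_cube (F l))"
    unfolding sample_space_def using intF by (intro P.product_integral_prod) auto
  also have "\<dots> = integral\<^sup>L unif_cube f"
    using k by (simp add: intFv prod.delta)
  finally show "integral\<^sup>L (sample_space m :: (nat \<Rightarrow> real^'d::finite) measure) (\<lambda>\<omega>. f (\<omega> k)) = integral\<^sup>L unif_cube f"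
    unfolding prodF .
qed

lemma int_unif_bounded:
  fixes f :: "real^'d::finite \<Rightarrow> real"
  assumes [measurable]: "f \<in> borel_measurable borel" and b: "\<And>x. x \<in> cubeC \<Longrightarrow> \<bar>f x\<bar> \<le> B"
  shows "integrable unif_cube f"
proof -
  interpret U: prob_space "unif_cube :: (real^'d::finite) measure" by (rule prob_unif)
  show ?thesis
    by (rule U.integrable_const_bound[where B=B]) (auto intro: eventually_mono[OF AE_unif] b)
qed

lemma int_coord: "integrable (unif_cube :: (real^'d::finite) measure) (\<lambda>x. x $ i)"
  by (rule int_unif_bounded[where B=1]) (auto simp: cubeC_def)

lemma int_coord2: "integrable (unif_cube :: (real^'d::finite) measure) (\<lambda>x. x $ i * x $ j)"
proof (rule int_unif_bounded[where B=1])
  fix x :: "real^'d" assume "x \<in> cubeC"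
  then have "\<bar>x $ i\<bar> \<le> 1" "\<bar>x $ j\<bar> \<le> 1" by (auto simp: cubeC_def)
  then show "\<bar>x $ i * x $ j\<bar> \<le> 1" by (simp add: abs_mult mult_le_one)
qed auto

definition Yf :: "'d::finite \<Rightarrow> 'd \<Rightarrow> nat \<Rightarrow> (nat \<Rightarrow> real^'d) \<Rightarrow> real" where
  "Yf i j k x = (x k $ i - x (Suc k) $ i) * (x k $ j - x (Suc k) $ j)"

lemma E_Y:
  assumes "Suc k < m"
  shows "integral\<^sup>L (sample_space m :: (nat \<Rightarrow> real^'d::finite) measure) (Yf i j k) = (if i = j then 1/6 else 0)"
proof -
  let ?M = "sample_space m :: (nat \<Rightarrow> real^'d::finite) measure"
  have k: "k < m" "Suc k < m" "k \<noteq> Suc k" "Suc k \<noteq> k" using assms by auto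
  have Yeq: "Yf i j k = (\<lambda>\<omega>. ((\<omega> k $ i * \<omega> k $ j - \<omega> k $ i * \<omega> (Suc k) $ j) - \<omega> (Suc k) $ i * \<omega> k $ j)
      + \<omega> (Suc k) $ i * \<omega> (Suc k) $ j)"
    by (auto simp: Yf_def fun_eq_iff algebra_simps)
  note a = PM_int1[OF k(1) int_coord2[of i j]] PM_int1[OF k(2) int_coord2[of i j]]
  note b = PM_int2[OF k(3) k(1) k(2) int_coord[of i] int_coord[of j]]
           PM_int2[OF k(4) k(2) k(1) int_coord[of i] int_coord[of j]]
  have "integral\<^sup>L ?M (Yf i j k) = integral\<^sup>L unif_cube (\<lambda>x::real^'d. x $ i * x $ j) * 2
      - 2 * (integral\<^sup>L unif_cube (\<lambda>x::real^'d. x $ i) * integral\<^sup>L unif_cube (\<lambda>x::real^'d. x $ j))"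
    unfolding Yeq using a b by (simp add: integral_add integral_diff)
  also have "\<dots> = (if i = j then 1/6 else 0)"
  proof (cases "i = j")
    case True
    have h1: "integral\<^sup>L unif_cube (\<lambda>x::real^'d. x $ i * x $ i) = 1/3"
      using E_sq[of i] by (simp add: power2_eq_square)
    show ?thesis unfolding True[symmetric] by (simp only: h1 E_coord) simp
  next
    case False
    then show ?thesis by (simp only: E_cross[OF False] E_coord) simp
  qed
  finally show ?thesis .
qed




lemma indep_coords:
  assumes "m > 0"
  shows "prob_space.indep_vars (sample_space m :: (nat \<Rightarrow> real^'d::finite) measure) (\<lambda>_. unif_cube) (\<lambda>k \<omega>. \<omega> k) {..<m}"
proof -
  let ?M = "sample_space m :: (nat \<Rightarrow> real^'d::finite) measure"
  interpret M: prob_space ?M by (rule prob_M)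
  have rv: "(\<lambda>\<omega>. \<omega> k) \<in> measurable ?M unif_cube" if "k \<in> {..<m}" for k
    unfolding sample_space_def using that measurable_component_singleton[of k "{..<m}" "\<lambda>_. unif_cube :: (real^'d) measure"] by auto
  have "distr ?M (\<Pi>\<^sub>M i\<in>{..<m}. unif_cube) (\<lambda>x. \<lambda>i\<in>{..<m}. x i) = distr ?M ?M (\<lambda>x. x)"
    unfolding sample_space_def
    by (intro distr_cong) (auto simp: space_PiM fun_eq_iff PiE_def extensional_def)
  also have "\<dots> = ?M" by simp
  also have "\<dots> = (\<Pi>\<^sub>M i\<in>{..<m}. distr ?M unif_cube (\<lambda>\<omega>. \<omega> i))"
    unfolding sample_space_def
    by (intro PiM_cong refl distr_PiM_component[symmetric] prob_unif) simp
  finally show ?thesis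
    using assms by (subst M.indep_vars_iff_distr_eq_PiM'[OF _ rv]) auto
qed

lemma indep_Y:
  assumes K: "K \<subseteq> {k. Suc k < m}" and dj: "disjoint_family_on (\<lambda>k. {k, Suc k}) K" and m0: "m > 0"
  shows "prob_space.indep_vars (sample_space m :: (nat \<Rightarrow> real^'d::finite) measure) (\<lambda>_. borel) (\<lambda>k. Yf i j k) K"
proof -
  let ?M = "sample_space m :: (nat \<Rightarrow> real^'d::finite) measure"
  interpret M: prob_space ?M by (rule prob_M)
  have I: "M.indep_vars (\<lambda>k. PiM {k, Suc k} (\<lambda>_. unif_cube)) (\<lambda>k \<omega>. restrict (\<lambda>l. \<omega> l) {k, Suc k}) K"
    using K dj by (intro M.indep_vars_restrict[OF indep_coords[OF m0]]) auto
  define Y' where "Y' = (\<lambda>(k::nat) (r::nat \<Rightarrow> real^'d). (r k $ i - r (Suc k) $ i) * (r k $ j - r (Suc k) $ j))"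
  have mY: "Y' k \<in> borel_measurable (PiM {k, Suc k} (\<lambda>_. unif_cube))" for k
  proof -
    have a: "(\<lambda>r. r k) \<in> borel_measurable (PiM {k, Suc k} (\<lambda>_. unif_cube :: (real^'d) measure))"
      using measurable_component_singleton[of k "{k, Suc k}" "\<lambda>_. unif_cube :: (real^'d) measure"]
      by (simp cong: measurable_cong_sets)
    have b: "(\<lambda>r. r (Suc k)) \<in> borel_measurable (PiM {k, Suc k} (\<lambda>_. unif_cube :: (real^'d) measure))"
      using measurable_component_singleton[of "Suc k" "{k, Suc k}" "\<lambda>_. unif_cube :: (real^'d) measure"]
      by (simp cong: measurable_cong_sets)
    have c: "(\<lambda>r. r l $ q) \<in> borel_measurable (PiM {k, Suc k} (\<lambda>_. unif_cube :: (real^'d) measure))"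
      if "(\<lambda>r. r l) \<in> borel_measurable (PiM {k, Suc k} (\<lambda>_. unif_cube :: (real^'d) measure))" for l q
      by (rule measurable_compose[OF that borel_measurable_nth])
    show ?thesis unfolding Y'_def
      by (intro borel_measurable_times borel_measurable_diff c a b)
  qed
  have "M.indep_vars (\<lambda>_. borel) (\<lambda>k x. Y' k (restrict (\<lambda>l. x l) {k, Suc k})) K"
    by (rule M.indep_vars_compose2[OF I mY])
  moreover have "(\<lambda>k x. Y' k (restrict (\<lambda>l. x l) {k, Suc k})) = (\<lambda>k. Yf i j k)"
    by (auto simp: fun_eq_iff Y'_def Yf_def)
  ultimately show ?thesis by simp
qed

lemma AE_Y:
  assumes "Suc k < m"
  shows "AE x in (sample_space m :: (nat \<Rightarrow> real^'d::finite) measure). Yf i j k x \<in> {-1..1}"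
proof -
  have a: "AE x in (sample_space m :: (nat \<Rightarrow> real^'d::finite) measure). x k \<in> cubeC"
    unfolding sample_space_def using assms by (intro AE_PiM_component prob_unif AE_unif) auto
  have b: "AE x in (sample_space m :: (nat \<Rightarrow> real^'d::finite) measure). x (Suc k) \<in> cubeC"
    unfolding sample_space_def using assms by (intro AE_PiM_component prob_unif AE_unif) auto
  show ?thesis
  proof (rule eventually_mono[OF eventually_conj[OF a b]])
    fix x :: "nat \<Rightarrow> real^'d" assume "x k \<in> cubeC \<and> x (Suc k) \<in> cubeC"
    then have h: "\<bar>x k $ i - x (Suc k) $ i\<bar> \<le> 1" "\<bar>x k $ j - x (Suc k) $ j\<bar> \<le> 1"
      by (auto simp: cubeC_def abs_le_iff) (smt (verit))+
    then have "\<bar>Yf i j k x\<bar> \<le> 1" unfolding Yf_def abs_mult by (intro mult_le_one) auto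
    then show "Yf i j k x \<in> {-1..1}" by auto
  qed
qed

lemma hoeff:
  assumes K: "K \<subseteq> {k. Suc k < m}" and dj: "disjoint_family_on (\<lambda>k. {k, Suc k}) K"
    and Kne: "K \<noteq> {}" and t: "t \<ge> 0"
  shows "measure (sample_space m :: (nat \<Rightarrow> real^'d::finite) measure)
     {x \<in> space (sample_space m). \<bar>(\<Sum>k\<in>K. Yf i j k x) - real (card K) * (if i = j then 1/6 else 0)\<bar> \<ge> t}
     \<le> 2 * exp (- t\<^sup>2 / (2 * real (card K)))"
proof -
  let ?M = "sample_space m :: (nat \<Rightarrow> real^'d::finite) measure"
  have finK: "finite K" using K by (intro finite_subset[OF _ finite_lessThan[of m]]) auto
  have m0: "m > 0" using K Kne by auto
  interpret M: prob_space ?M by (rule prob_M)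
  interpret H: Hoeffding_ineq ?M K "\<lambda>k. Yf i j k" "\<lambda>_. -1" "\<lambda>_. 1" "(\<Sum>k\<in>K. integral\<^sup>L ?M (Yf i j k))"
  proof unfold_locales
    show "finite K" by (rule finK)
    show "M.indep_vars (\<lambda>_. borel) (\<lambda>k. Yf i j k) K" by (rule indep_Y[OF K dj m0])
    fix k assume "k \<in> K"
    then have "Suc k < m" using K by auto
    then show "AE x in ?M. Yf i j k x \<in> {-1..1}" by (rule AE_Y)
  qed simp
  have mu: "(\<Sum>k\<in>K. integral\<^sup>L ?M (Yf i j k)) = real (card K) * (if i = j then 1/6 else 0)"
    using K by (simp add: E_Y subset_eq)
  have pos: "(\<Sum>k\<in>K. (1 - (-1::real))\<^sup>2) > 0" using finK Kne by (simp add: card_gt_0_iff)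
  have "measure ?M {x \<in> space ?M. \<bar>(\<Sum>k\<in>K. Yf i j k x) - (\<Sum>k\<in>K. integral\<^sup>L ?M (Yf i j k))\<bar> \<ge> t}
      \<le> 2 * exp (-2 * t\<^sup>2 / (\<Sum>k\<in>K. (1 - (-1::real))\<^sup>2))"
    by (rule H.Hoeffding_ineq_abs_ge[OF t pos])
  also have "-2 * t\<^sup>2 / (\<Sum>k\<in>K. (1 - (-1::real))\<^sup>2) = - t\<^sup>2 / (2 * real (card K))"
    by simp
  finally show ?thesis unfolding mu .
qed




lemma A_inner: "A_row x k \<bullet> z = 2 * (\<Sum>i\<in>UNIV. (x k $ i - x (Suc k) $ i) * z $ i)"
  by (simp add: A_row_def inner_vec_def sum_distrib_left mult_ac)

lemma A_sq: "(A_row x k \<bullet> z)\<^sup>2 = 4 * (\<Sum>i\<in>UNIV. \<Sum>j\<in>UNIV. z $ i * z $ j * Yf i j k x)"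
proof -
  have "(A_row x k \<bullet> z)\<^sup>2 = 4 * ((\<Sum>i\<in>UNIV. (x k $ i - x (Suc k) $ i) * z $ i) * (\<Sum>j\<in>UNIV. (x k $ j - x (Suc k) $ j) * z $ j))"
    by (simp add: A_inner power2_eq_square)
  also have "\<dots> = 4 * (\<Sum>i\<in>UNIV. \<Sum>j\<in>UNIV. z $ i * z $ j * Yf i j k x)"
    by (simp add: sum_product Yf_def mult_ac)
  finally show ?thesis .
qed

lemma A_sum: "(\<Sum>k<n. (A_row x k \<bullet> z)\<^sup>2) = 4 * (\<Sum>i\<in>UNIV. \<Sum>j\<in>UNIV. z $ i * z $ j * (\<Sum>k<n. Yf i j k x))"
proof -
  have "(\<Sum>k<n. (A_row x k \<bullet> z)\<^sup>2) = 4 * (\<Sum>k<n. \<Sum>i\<in>UNIV. \<Sum>j\<in>UNIV. z $ i * z $ j * Yf i j k x)"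
    by (simp add: A_sq sum_distrib_left)
  also have "(\<Sum>k<n. \<Sum>i\<in>UNIV. \<Sum>j\<in>UNIV. z $ i * z $ j * Yf i j k x)
     = (\<Sum>i\<in>UNIV. \<Sum>k<n. \<Sum>j\<in>UNIV. z $ i * z $ j * Yf i j k x)"
    by (rule sum.swap)
  also have "\<dots> = (\<Sum>i\<in>UNIV. \<Sum>j\<in>UNIV. \<Sum>k<n. z $ i * z $ j * Yf i j k x)"
    by (intro sum.cong refl sum.swap)
  also have "\<dots> = (\<Sum>i\<in>UNIV. \<Sum>j\<in>UNIV. z $ i * z $ j * (\<Sum>k<n. Yf i j k x))"
    by (simp add: sum_distrib_left)
  finally show ?thesis .
qed

lemma abs_quad:
  fixes z :: "real^'d::finite"
  assumes E: "\<And>i j. \<bar>E i j\<bar> \<le> s"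
  shows "\<bar>\<Sum>i\<in>UNIV. \<Sum>j\<in>UNIV. z $ i * z $ j * E i j\<bar> \<le> s * real CARD('d) * (\<Sum>i\<in>UNIV. (z $ i)\<^sup>2)"
proof -
  have "\<bar>\<Sum>i\<in>UNIV. \<Sum>j\<in>UNIV. z $ i * z $ j * E i j\<bar> \<le> (\<Sum>i\<in>UNIV. \<Sum>j\<in>UNIV. \<bar>z $ i * z $ j * E i j\<bar>)"
    by (rule order_trans[OF sum_abs]) (intro sum_mono sum_abs)
  also have "\<dots> \<le> (\<Sum>i\<in>UNIV. \<Sum>j\<in>UNIV. s * (((z $ i)\<^sup>2 + (z $ j)\<^sup>2) / 2))"
  proof (intro sum_mono)
    fix i j
    have a: "\<bar>z $ i * z $ j\<bar> \<le> ((z $ i)\<^sup>2 + (z $ j)\<^sup>2) / 2"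
      using sum_squares_bound[of "\<bar>z $ i\<bar>" "\<bar>z $ j\<bar>"]
      by (simp add: abs_mult power2_eq_square)
    have "\<bar>z $ i * z $ j * E i j\<bar> = \<bar>z $ i * z $ j\<bar> * \<bar>E i j\<bar>" by (simp add: abs_mult)
    also have "\<dots> \<le> (((z $ i)\<^sup>2 + (z $ j)\<^sup>2) / 2) * s"
      by (intro mult_mono a E) auto
    finally show "\<bar>z $ i * z $ j * E i j\<bar> \<le> s * (((z $ i)\<^sup>2 + (z $ j)\<^sup>2) / 2)" by (simp add: mult_ac)
  qed
  also have "\<dots> = s * real CARD('d) * (\<Sum>i\<in>UNIV. (z $ i)\<^sup>2)"
  proof -
    define N where "N = (\<Sum>i\<in>UNIV. (z $ i)\<^sup>2)"
    have sp: "s * ((a + b) / 2) = s/2 * a + s/2 * b" for a b :: real by (simp add: field_simps)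
    have "(\<Sum>j\<in>UNIV. s * (((z $ i)\<^sup>2 + (z $ j)\<^sup>2) / 2)) = s/2 * real CARD('d) * (z $ i)\<^sup>2 + s/2 * N" for i
      unfolding sp sum.distrib N_def by (simp only: sum_distrib_left[symmetric] sum_constant)
    then have "(\<Sum>i\<in>UNIV. \<Sum>j\<in>UNIV. s * (((z $ i)\<^sup>2 + (z $ j)\<^sup>2) / 2))
       = (\<Sum>i\<in>UNIV. s/2 * real CARD('d) * (z $ i)\<^sup>2 + s/2 * N)" by simp
    also have "\<dots> = s/2 * real CARD('d) * N + real CARD('d) * (s/2 * N)"
      unfolding sum.distrib N_def by (simp only: sum_distrib_left[symmetric] sum_constant) (simp add: mult_ac)
    also have "\<dots> = s * real CARD('d) * N" by (simp add: field_simps)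
    finally show ?thesis unfolding N_def .
  qed
  finally show ?thesis .
qed

lemma norm_sq_vec: "(norm (z::real^'d::finite))\<^sup>2 = (\<Sum>i\<in>UNIV. (z $ i)\<^sup>2)"
  unfolding power2_norm_eq_inner inner_vec_def by (simp add: power2_eq_square)

lemma det_step:
  fixes x :: "nat \<Rightarrow> real^'d::finite"
  assumes m: "m \<ge> 2"
    and S: "\<And>i j. \<bar>(\<Sum>k<m-1. Yf i j k x) - real (m-1) * (if i = j then 1/6 else 0)\<bar> \<le> real (m-1) / (12 * real CARD('d))"
  shows "\<forall>z. (norm z)\<^sup>2 \<le> 3 / (real m - 1) * (\<Sum>k<m-1. (A_row x k \<bullet> z)\<^sup>2)"
proof
  fix z :: "real^'d"
  define N where "N = (\<Sum>i\<in>UNIV. (z $ i)\<^sup>2)"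
  define E where "E = (\<lambda>i j. (\<Sum>k<m-1. Yf i j k x) - real (m-1) * (if i = j then 1/6 else 0))"
  define s where "s = real (m-1) / (12 * real CARD('d))"
  have N0: "N \<ge> 0" unfolding N_def by (intro sum_nonneg) auto
  have "(\<Sum>i\<in>UNIV. \<Sum>j\<in>UNIV. z $ i * z $ j * (\<Sum>k<m-1. Yf i j k x))
      = (\<Sum>i\<in>UNIV. \<Sum>j\<in>UNIV. z $ i * z $ j * (real (m-1) * (if i = j then 1/6 else 0)))
        + (\<Sum>i\<in>UNIV. \<Sum>j\<in>UNIV. z $ i * z $ j * E i j)"
  proof -
    have "z $ i * z $ j * (\<Sum>k<m-1. Yf i j k x) = z $ i * z $ j * (real (m-1) * (if i = j then 1/6 else 0)) + z $ i * z $ j * E i j" for i j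
      by (simp add: E_def ring_distribs)
    then show ?thesis by (simp add: sum.distrib)
  qed
  also have "(\<Sum>i\<in>UNIV. \<Sum>j\<in>UNIV. z $ i * z $ j * (real (m-1) * (if i = j then 1/6 else 0)))
      = real (m-1) / 6 * N"
  proof -
    have "z $ i * z $ j * (real (m-1) * (if i = j then 1/6 else 0)) = (if j = i then real (m-1) / 6 * (z $ i)\<^sup>2 else 0)" for i j
      by (auto simp: power2_eq_square)
    then show ?thesis by (simp add: N_def sum_distrib_left)
  qed
  finally have eq: "(\<Sum>i\<in>UNIV. \<Sum>j\<in>UNIV. z $ i * z $ j * (\<Sum>k<m-1. Yf i j k x))
      = real (m-1) / 6 * N + (\<Sum>i\<in>UNIV. \<Sum>j\<in>UNIV. z $ i * z $ j * E i j)" .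
  have "\<bar>\<Sum>i\<in>UNIV. \<Sum>j\<in>UNIV. z $ i * z $ j * E i j\<bar> \<le> s * real CARD('d) * N"
    unfolding N_def by (rule abs_quad) (use S in \<open>simp add: E_def s_def\<close>)
  also have "s * real CARD('d) * N = real (m-1) / 12 * N" by (simp add: s_def)
  finally have "(\<Sum>i\<in>UNIV. \<Sum>j\<in>UNIV. z $ i * z $ j * (\<Sum>k<m-1. Yf i j k x)) \<ge> real (m-1) / 12 * N"
    unfolding eq by linarith
  then have low: "(\<Sum>k<m-1. (A_row x k \<bullet> z)\<^sup>2) \<ge> real (m-1) / 3 * N"
    unfolding A_sum by linarith
  have hm: "real m - 1 = real (m - 1)" using m by simp
  have "real (m-1) > 0" using m by simp
  have "3 / (real m - 1) * (\<Sum>k<m-1. (A_row x k \<bullet> z)\<^sup>2) \<ge> 3 / real (m-1) * (real (m-1) / 3 * N)"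
    unfolding hm by (intro mult_left_mono low) auto
  also have "3 / real (m-1) * (real (m-1) / 3 * N) = N" using \<open>real (m-1) > 0\<close> by simp
  finally show "(norm z)\<^sup>2 \<le> 3 / (real m - 1) * (\<Sum>k<m-1. (A_row x k \<bullet> z)\<^sup>2)"
    by (simp add: norm_sq_vec N_def[symmetric])
qed




definition Kpar :: "nat \<Rightarrow> nat \<Rightarrow> nat set" where
  "Kpar m p = {k. k < m - 1 \<and> k mod 2 = p}"

lemma Kpar_sub: "Kpar m p \<subseteq> {k. Suc k < m}"
  by (auto simp: Kpar_def)

lemma Kpar_fin: "finite (Kpar m p)"
  by (rule finite_subset[of _ "{..<m}"]) (auto simp: Kpar_def)

lemma Kpar_dj: "disjoint_family_on (\<lambda>k. {k, Suc k}) (Kpar m p)"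
  unfolding disjoint_family_on_def Kpar_def by auto presburger+

lemma Kpar_union: "{..<m-1} = Kpar m 0 \<union> Kpar m 1"
  by (auto simp: Kpar_def)

lemma Kpar_card: "card (Kpar m 0) + card (Kpar m 1) = m - 1"
proof -
  have "card (Kpar m 0 \<union> Kpar m 1) = card (Kpar m 0) + card (Kpar m 1)"
    by (rule card_Un_disjoint) (auto simp: Kpar_fin Kpar_def)
  then show ?thesis using Kpar_union[of m] by (metis card_lessThan)
qed

lemma Kpar_card_le: "card (Kpar m p) \<le> m"
proof -
  have "card (Kpar m p) \<le> card {..<m}"
    by (rule card_mono) (auto simp: Kpar_def)
  then show ?thesis by simp
qed

lemma Kpar_ne: "m \<ge> 3 \<Longrightarrow> p \<in> {0,1} \<Longrightarrow> Kpar m p \<noteq> {}"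
  by (auto simp: Kpar_def intro!: exI[of _ p])

lemma meas_Y:
  assumes "Suc k < m"
  shows "Yf i j k \<in> borel_measurable (sample_space m :: (nat \<Rightarrow> real^'d::finite) measure)"
proof -
  have a: "(\<lambda>x. x k) \<in> borel_measurable (sample_space m :: (nat \<Rightarrow> real^'d::finite) measure)"
    using assms by (intro meas_coord) auto
  have b: "(\<lambda>x. x (Suc k)) \<in> borel_measurable (sample_space m :: (nat \<Rightarrow> real^'d::finite) measure)"
    using assms by (intro meas_coord) auto
  have c: "(\<lambda>r. r l $ q) \<in> borel_measurable (sample_space m :: (nat \<Rightarrow> real^'d::finite) measure)"
    if "(\<lambda>r. r l) \<in> borel_measurable (sample_space m :: (nat \<Rightarrow> real^'d::finite) measure)" for l q
    by (rule measurable_compose[OF that borel_measurable_nth])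
  have "(\<lambda>x. (x k $ i - x (Suc k) $ i) * (x k $ j - x (Suc k) $ j)) \<in> borel_measurable (sample_space m :: (nat \<Rightarrow> real^'d::finite) measure)"
    by (intro borel_measurable_times borel_measurable_diff c a b)
  then show ?thesis unfolding Yf_def[abs_def] .
qed

lemma main_prob:
  assumes m3: "m \<ge> 3"
  shows "measure (sample_space m :: (nat \<Rightarrow> real^'d::finite) measure)
      {x \<in> space (sample_space m). invertible (gram m x) \<and> spec_norm (m - 1) (pinv_col m x) \<le> sqrt (3 / (real m - 1))}
    \<ge> 1 - 4 * (real CARD('d))\<^sup>2 * exp (- ((real m - 1)\<^sup>2 / (1152 * (real CARD('d))\<^sup>2 * real m)))"
proof -
  let ?M = "sample_space m :: (nat \<Rightarrow> real^'d::finite) measure"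
  interpret M: prob_space ?M by (rule prob_M)
  define d where "d = real CARD('d)"
  have d0: "d > 0" by (simp add: d_def)
  define t where "t = real (m-1) / (24 * d)"
  have t0: "t \<ge> 0" using d0 by (simp add: t_def)
  define B where "B = (\<lambda>(i::'d) (j::'d) (p::nat). {x \<in> space ?M.
      \<bar>(\<Sum>k\<in>Kpar m p. Yf i j k x) - real (card (Kpar m p)) * (if i = j then 1/6 else 0)\<bar> \<ge> t})"
  define I where "I = (UNIV :: 'd set) \<times> (UNIV :: 'd set) \<times> {0::nat, 1}"
  define BB where "BB = (\<lambda>q. B (fst q) (fst (snd q)) (snd (snd q)))"
  have BB_eq: "BB (i, j, p) = {x \<in> space ?M. t \<le> \<bar>(\<Sum>k\<in>Kpar m p. Yf i j k x) - real (card (Kpar m p)) * (if i = j then 1/6 else 0)\<bar>}" for i j p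
    by (simp add: BB_def B_def)
  have finI: "finite I" by (simp add: I_def)
  have cardI: "card I = CARD('d) * CARD('d) * 2" by (simp add: I_def card_cartesian_product)
  have Bsets: "BB q \<in> sets ?M" for q
  proof -
    obtain i j p where q: "q = (i, j, p)" by (cases q) auto
    have [measurable]: "(\<lambda>x. (\<Sum>k\<in>Kpar m p. Yf i j k x)) \<in> borel_measurable ?M"
      by (intro borel_measurable_sum meas_Y) (use Kpar_sub in auto)
    have e: "BB q = {x \<in> space ?M. t \<le> \<bar>(\<Sum>k\<in>Kpar m p. Yf i j k x) - real (card (Kpar m p)) * (if i = j then 1/6 else 0)\<bar>}"
      by (simp add: BB_def B_def q)
    show ?thesis unfolding e by measurable
  qed
  have Bprob: "measure ?M (BB q) \<le> 2 * exp (- t\<^sup>2 / (2 * real m))" if "q \<in> I" for q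
  proof -
    obtain i j p where q: "q = (i, j, p)" by (cases q) auto
    have p: "p \<in> {0,1}" using that by (auto simp: q I_def)
    have ne: "Kpar m p \<noteq> {}" by (rule Kpar_ne[OF m3 p])
    have cpos: "real (card (Kpar m p)) > 0" using ne Kpar_fin by (simp add: card_gt_0_iff)
    have cle: "real (card (Kpar m p)) \<le> real m" using Kpar_card_le by simp
    have "measure ?M (BB q) \<le> 2 * exp (- t\<^sup>2 / (2 * real (card (Kpar m p))))"
      unfolding q BB_eq by (rule hoeff[OF Kpar_sub Kpar_dj ne t0])
    also have "\<dots> \<le> 2 * exp (- t\<^sup>2 / (2 * real m))"
      using cpos cle by (simp add: frac_le)
    finally show ?thesis .
  qed
  let ?G = "{x \<in> space ?M. invertible (gram m x) \<and> spec_norm (m - 1) (pinv_col m x) \<le> sqrt (3 / (real m - 1))}"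
  let ?Q = "{x \<in> space ?M. \<forall>z. (norm z)\<^sup>2 \<le> 3 / (real m - 1) * (\<Sum>k<m-1. (A_row x k \<bullet> z)\<^sup>2)}"
  have c20: "3 / (real m - 1) \<ge> 0" using m3 by simp
  have GQ: "?G = ?Q"
    using Q_imp_good[OF _ c20] good_imp_Q[OF _ _ c20] by blast
  have Gsets: "?G \<in> sets ?M" unfolding GQ by (rule Q_sets)
  have sub: "space ?M - (\<Union>q\<in>I. BB q) \<subseteq> ?G"
  proof
    fix x assume x: "x \<in> space ?M - (\<Union>q\<in>I. BB q)"
    have small: "\<bar>(\<Sum>k\<in>Kpar m p. Yf i j k x) - real (card (Kpar m p)) * (if i = j then 1/6 else 0)\<bar> < t"
      if "p \<in> {0,1}" for i j p
    proof -
      have "(i, j, p) \<in> I" using that by (simp add: I_def)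
      then have "x \<notin> BB (i, j, p)" using x by blast
      then show ?thesis using x by (auto simp: BB_def B_def)
    qed
    have S: "\<bar>(\<Sum>k<m-1. Yf i j k x) - real (m-1) * (if i = j then 1/6 else 0)\<bar> \<le> real (m-1) / (12 * real CARD('d))" for i j
    proof -
      have "(\<Sum>k<m-1. Yf i j k x) = (\<Sum>k\<in>Kpar m 0. Yf i j k x) + (\<Sum>k\<in>Kpar m 1. Yf i j k x)"
        unfolding Kpar_union[of m] by (rule sum.union_disjoint) (auto simp: Kpar_fin Kpar_def)
      moreover have "real (m-1) = real (card (Kpar m 0)) + real (card (Kpar m 1))"
        using Kpar_card[of m] by linarith
      ultimately have "\<bar>(\<Sum>k<m-1. Yf i j k x) - real (m-1) * (if i = j then 1/6 else 0)\<bar>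
         \<le> \<bar>(\<Sum>k\<in>Kpar m 0. Yf i j k x) - real (card (Kpar m 0)) * (if i = j then 1/6 else 0)\<bar>
          + \<bar>(\<Sum>k\<in>Kpar m 1. Yf i j k x) - real (card (Kpar m 1)) * (if i = j then 1/6 else 0)\<bar>"
        by (simp add: algebra_simps)
      also have "\<dots> < t + t" using small[of 0 i j] small[of 1 i j] by simp
      also have "t + t = real (m-1) / (12 * real CARD('d))" by (simp add: t_def d_def)
      finally show ?thesis by (rule less_imp_le)
    qed
    have "\<forall>z. (norm z)\<^sup>2 \<le> 3 / (real m - 1) * (\<Sum>k<m-1. (A_row x k \<bullet> z)\<^sup>2)"
      using m3 S by (intro det_step) auto
    then show "x \<in> ?G" using x GQ by blast
  qed
  have Usets: "(\<Union>q\<in>I. BB q) \<in> sets ?M" using finI Bsets by auto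
  have "1 - 4 * d\<^sup>2 * exp (- t\<^sup>2 / (2 * real m)) \<le> 1 - (\<Sum>q\<in>I. measure ?M (BB q))"
  proof -
    have "(\<Sum>q\<in>I. measure ?M (BB q)) \<le> (\<Sum>q\<in>I. 2 * exp (- t\<^sup>2 / (2 * real m)))"
      by (intro sum_mono Bprob)
    also have "\<dots> = 4 * d\<^sup>2 * exp (- t\<^sup>2 / (2 * real m))"
      by (simp add: cardI d_def power2_eq_square)
    finally show ?thesis by simp
  qed
  also have "\<dots> \<le> 1 - measure ?M (\<Union>q\<in>I. BB q)"
  proof -
    have "BB ` I \<subseteq> sets ?M" using Bsets by auto
    then have "measure ?M (\<Union>q\<in>I. BB q) \<le> (\<Sum>q\<in>I. measure ?M (BB q))"
      by (rule M.finite_measure_subadditive_finite[OF finI])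
    then show ?thesis by simp
  qed
  also have "\<dots> = measure ?M (space ?M - (\<Union>q\<in>I. BB q))"
    by (rule M.prob_compl[OF Usets, symmetric])
  also have "\<dots> \<le> measure ?M ?G"
    by (rule M.finite_measure_mono[OF sub Gsets])
  finally have main: "1 - 4 * d\<^sup>2 * exp (- t\<^sup>2 / (2 * real m)) \<le> measure ?M ?G" .
  have hm: "real (m - 1) = real m - 1" using m3 by simp
  have "t\<^sup>2 / (2 * real m) = (real m - 1)\<^sup>2 / (1152 * d\<^sup>2 * real m)"
    unfolding t_def power_divide hm by (simp add: power_mult_distrib divide_divide_eq_left mult_ac)
  then show ?thesis using main by (simp add: d_def)
qed




lemma ev_bound:
  assumes a0: "0 < \<alpha>" and a1: "\<alpha> < 1" and c0: "c > 0"
  shows "\<exists>M0::nat. \<forall>m\<ge>M0. 4 * exp (- ((real m - 1)\<^sup>2 / (c * real m))) \<le> 3 * exp (- (real m powr \<alpha>))"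
proof -
  define L where "L = ln (4/3::real)"
  have L0: "L \<ge> 0" by (simp add: L_def)
  have lim: "((\<lambda>m::nat. real m powr (\<alpha> - 1)) \<longlongrightarrow> 0) sequentially"
    using a1 by (intro tendsto_neg_powr filterlim_real_sequentially) auto
  have ev1: "eventually (\<lambda>m::nat. real m powr (\<alpha> - 1) < 1 / (2 * c)) sequentially"
    using c0 by (intro order_tendstoD(2)[OF lim]) auto
  define N where "N = nat \<lceil>4 + 2 * c * L\<rceil> + 1"
  have ev2: "eventually (\<lambda>m::nat. m \<ge> N) sequentially" by (rule eventually_ge_at_top)
  obtain M0 where M0: "\<And>m. m \<ge> M0 \<Longrightarrow> real m powr (\<alpha> - 1) < 1 / (2 * c) \<and> m \<ge> N"
    using eventually_conj[OF ev1 ev2] unfolding eventually_sequentially by blast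
  show ?thesis
  proof (intro exI[of _ M0] allI impI)
    fix m assume "m \<ge> M0"
    then have h1: "real m powr (\<alpha> - 1) < 1 / (2 * c)" and h2: "m \<ge> N" using M0 by auto
    have mN: "real m \<ge> 4 + 2 * c * L + 1"
    proof -
      have "real N \<ge> 4 + 2 * c * L + 1" unfolding N_def by linarith
      then show ?thesis using h2 by linarith
    qed
    then have mpos: "real m > 0" using c0 L0 by (smt (verit) mult_nonneg_nonneg)
    have "real m powr \<alpha> = real m powr (\<alpha> - 1) * real m"
    proof -
      have "real m powr (\<alpha> - 1) * real m = real m powr (\<alpha> - 1) * real m powr 1" using mpos by simp
      also have "\<dots> = real m powr \<alpha>" by (subst powr_add[symmetric]) simp
      finally show ?thesis by simp
    qed
    also have "\<dots> \<le> 1 / (2 * c) * real m"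
      using h1 mpos by (intro mult_right_mono) auto
    finally have p1: "real m powr \<alpha> \<le> real m / (2 * c)" by simp
    have p2: "real m / (2 * c) \<ge> 2 / c + L"
    proof -
      have "real m \<ge> 4 + 2 * c * L" using mN by simp
      then have "real m / (2 * c) \<ge> (4 + 2 * c * L) / (2 * c)"
        using c0 by (intro divide_right_mono) auto
      also have "(4 + 2 * c * L) / (2 * c) = 2 / c + L" using c0 by (simp add: field_simps)
      finally show ?thesis .
    qed
    have p3: "(real m - 1)\<^sup>2 / (c * real m) \<ge> (real m - 2) / c"
    proof -
      have "(real m - 2) * real m \<le> (real m - 1)\<^sup>2" by (simp add: power2_eq_square algebra_simps)
      then have "(real m - 2) * real m / (c * real m) \<le> (real m - 1)\<^sup>2 / (c * real m)"
        using c0 mpos by (intro divide_right_mono) auto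
      also have "(real m - 2) * real m / (c * real m) = (real m - 2) / c" using mpos by simp
      finally show ?thesis .
    qed
    have key: "real m powr \<alpha> + L \<le> (real m - 1)\<^sup>2 / (c * real m)"
    proof -
      have "(real m - 2) / c = real m / c - 2 / c" by (simp add: diff_divide_distrib)
      also have "real m / c = 2 * (real m / (2 * c))" using c0 by simp
      finally have "(real m - 2) / c = 2 * (real m / (2 * c)) - 2 / c" .
      then show ?thesis using p1 p2 p3 by linarith
    qed
    have "exp (- ((real m - 1)\<^sup>2 / (c * real m))) \<le> exp (- (real m powr \<alpha>) - L)"
      using key by simp
    also have "\<dots> = exp (- (real m powr \<alpha>)) * (3/4)"
      by (simp add: exp_diff L_def)
    finally show "4 * exp (- ((real m - 1)\<^sup>2 / (c * real m))) \<le> 3 * exp (- (real m powr \<alpha>))"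
      by simp
  qed
qed

theorem mainTheorem9:
  fixes \<epsilon> :: real
  assumes "0 < \<epsilon>" and "\<epsilon> < 1/2"
  shows "\<exists>M::nat. \<forall>m\<ge>M.
    measure (sample_space m :: (nat \<Rightarrow> real^'d::finite) measure)
      {x \<in> space (sample_space m).
         invertible (gram m x) \<and>
         spec_norm (m - 1) (pinv_col m x) \<le> sqrt (3 / (real m - 1))}
    \<ge> 1 - 3 * (real CARD('d))\<^sup>2 * exp (- (real m powr (2 * \<epsilon>)))"
proof -
  define d where "d = real CARD('d)"
  have d0: "d > 0" by (simp add: d_def)
  obtain M0 where M0: "\<And>m. m \<ge> M0 \<Longrightarrow> 4 * exp (- ((real m - 1)\<^sup>2 / ((1152 * d\<^sup>2) * real m))) \<le> 3 * exp (- (real m powr (2 * \<epsilon>)))"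
    using ev_bound[of "2 * \<epsilon>" "1152 * d\<^sup>2"] assms d0 by auto
  show ?thesis
  proof (intro exI[of _ "max M0 3"] allI impI)
    fix m assume "max M0 3 \<le> m"
    then have m3: "m \<ge> 3" and mM: "m \<ge> M0" by auto
    have "1 - 3 * d\<^sup>2 * exp (- (real m powr (2 * \<epsilon>))) \<le> 1 - 4 * d\<^sup>2 * exp (- ((real m - 1)\<^sup>2 / (1152 * d\<^sup>2 * real m)))"
    proof -
      have "d\<^sup>2 * (4 * exp (- ((real m - 1)\<^sup>2 / ((1152 * d\<^sup>2) * real m)))) \<le> d\<^sup>2 * (3 * exp (- (real m powr (2 * \<epsilon>))))"
        by (intro mult_left_mono M0[OF mM]) auto
      then show ?thesis by (simp add: mult_ac)
    qed
    also have "\<dots> \<le> measure (sample_space m :: (nat \<Rightarrow> real^'d::finite) measure)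
      {x \<in> space (sample_space m).
         invertible (gram m x) \<and>
         spec_norm (m - 1) (pinv_col m x) \<le> sqrt (3 / (real m - 1))}"
      using main_prob[OF m3, where 'd='d] unfolding d_def .
    finally show "measure (sample_space m :: (nat \<Rightarrow> real^'d::finite) measure)
      {x \<in> space (sample_space m).
         invertible (gram m x) \<and>
         spec_norm (m - 1) (pinv_col m x) \<le> sqrt (3 / (real m - 1))}
    \<ge> 1 - 3 * (real CARD('d))\<^sup>2 * exp (- (real m powr (2 * \<epsilon>)))" unfolding d_def .
  qed
qed


end
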